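(* Let $\alpha<\beta$ and let $f$ be a nontrivial (not identically zero), analytic, almost periodic function in the strip $\mathbb{S}_{\alpha,\beta}$. For every $\delta>0$ there are numbers $A=A(f,\delta)$ and $B=B(f,\delta)$ such that \[\left|\frac{f'(s)}{f(s)}\right| \leq A + \frac{B}{\operatorname{dist}(s,\mathscr{Z}_f)}\] for every $s$ in $\mathbb{S}_{\alpha+\delta,\beta-\delta}$.
   Context: $\mathbb{S}_{\alpha,\beta}=\{\sigma+it:\alpha<\sigma<\beta\}$. A function $f$ on $\mathbb{S}_{\alpha,\beta}$ is almost periodic if for every $\varepsilon>0$ there is a relatively dense set of real $\tau$ with $|f(s+i\tau)-f(s)|\le\varepsilon$ for all $s\in\mathbb{S}_{\alpha,\beta}$. $\mathscr{Z}_f$ denotes the zero set of $f$ (with multiplicity), and $\operatorname{dist}(s,\mathscr{Z}_f)$ the distance from $s$ to it (understood as $+\infty$ if $\mathscr{Z}_f$ is empty). *)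

theory Defs
  imports "HOL-Analysis.Analysis"
begin

definition strip :: "real \<Rightarrow> real \<Rightarrow> complex set" where
  "strip \<alpha> \<beta> = {s. \<alpha> < Re s \<and> Re s < \<beta>}"

definition relatively_dense :: "real set \<Rightarrow> bool" where
  "relatively_dense T \<longleftrightarrow> (\<exists>L>0. \<forall>a. \<exists>\<tau>\<in>T. a \<le> \<tau> \<and> \<tau> \<le> a + L)"

definition almost_periodic_on :: "complex set \<Rightarrow> (complex \<Rightarrow> complex) \<Rightarrow> bool" where
  "almost_periodic_on S f \<longleftrightarrow>
     (\<forall>\<epsilon>>0. relatively_dense
        {\<tau>::real. \<forall>s\<in>S. cmod (f (s + \<i> * of_real \<tau>) - f s) \<le> \<epsilon>})"

definition zero_set :: "complex set \<Rightarrow> (complex \<Rightarrow> complex) \<Rightarrow> complex set" where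
  "zero_set S f = {z\<in>S. f z = 0}"

end

theory Submission
  imports Defs "HOL-Complex_Analysis.Complex_Analysis"
begin


lemma dist_eq_cmod: "dist s z = cmod (z - (s::complex))"
  unfolding dist_norm by (rule norm_minus_commute)

lemma wn_circle_out:
  assumes "r < norm (w - z)" "0 < r"
  shows "winding_number (circlepath z r) w = 0"
proof -
  have "w \<in> outside (path_image (circlepath z r))"
  proof -
    have "- cball z r \<subseteq> outside (path_image (circlepath z r))"
      using assms by (intro outside_subset_convex) (auto simp: path_image_circlepath_minus_subset)
    moreover have "w \<in> - cball z r" using assms by (auto simp: dist_norm norm_minus_commute)
    ultimately show ?thesis by blast
  qed
  then show ?thesis by (intro winding_number_zero_in_outside) auto
qed

lemma residue_logderiv_zero:
  assumes S: "open S" and p: "p \<in> S" and fh: "f holomorphic_on S" and hh: "h holomorphic_on S"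
    and e: "e > 0" "\<And>w. w \<in> ball p e - {p} \<Longrightarrow> f w \<noteq> 0" and fp: "f p = 0"
  shows "residue (\<lambda>x. deriv f x * h x / f x) p = h p * of_int (zorder f p)"
proof -
  obtain e1 where e1: "e1 > 0" "ball p e1 \<subseteq> S" "e1 \<le> e"
    using S p e(1) by (metis open_contains_ball_eq subset_ball min.cobounded1 min.cobounded2 min_less_iff_conj order.trans)
  define B where "B = ball p e1"
  have pz: "{w\<in>B. f w = 0 \<or> w \<in> {}} = {p}"
  proof (intro equalityI subsetI)
    fix x assume "x \<in> {w\<in>B. f w = 0 \<or> w \<in> {}}"
    then have "x \<in> ball p e" "f x = 0" using e1 by (auto simp: B_def)
    then show "x \<in> {p}" using e(2)[of x] by auto
  qed (use e1 fp in \<open>auto simp: B_def\<close>)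
  have AP: "contour_integral (circlepath p (e1/2)) (\<lambda>x. deriv f x * h x / f x) = 2 * pi * \<i> *
          (\<Sum>q\<in>{w\<in>B. f w = 0 \<or> w \<in> {}}. winding_number (circlepath p (e1/2)) q * h q * zorder f q)"
  proof (rule argument_principle)
    show "open B" "connected B" by (auto simp: B_def)
    show "f holomorphic_on B - {}" "h holomorphic_on B" using fh hh e1 by (auto simp: B_def intro: holomorphic_on_subset)
    show "valid_path (circlepath p (e1/2))" by simp
    show "pathfinish (circlepath p (e1/2)) = pathstart (circlepath p (e1/2))" by simp
    show "path_image (circlepath p (e1 / 2)) \<subseteq> B - {w \<in> B. f w = 0 \<or> w \<in> {}}"
      unfolding pz using e1 by (auto simp: B_def path_image_circlepath_minus_subset)
    show "\<forall>z. z \<notin> B \<longrightarrow> winding_number (circlepath p (e1 / 2)) z = 0"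
      using e1 by (auto simp: B_def dist_norm norm_minus_commute intro!: wn_circle_out)
    show "finite {w \<in> B. f w = 0 \<or> w \<in> {}}" unfolding pz by simp
    show "\<forall>q\<in>B \<inter> {}. is_pole f q" by simp
  qed
  have AP2: "contour_integral (circlepath p (e1/2)) (\<lambda>x. deriv f x * h x / f x) = 2 * pi * \<i> * (h p * zorder f p)"
    using AP unfolding pz using e1 by (simp add: winding_number_circlepath_centre)
  have "((\<lambda>x. deriv f x * h x / f x) has_contour_integral 2 * pi * \<i> * residue (\<lambda>x. deriv f x * h x / f x) p) (circlepath p (e1/2))"
  proof (rule base_residue[of B])
    show "open B" "p \<in> B" "e1/2 > 0" using e1 by (auto simp: B_def)
    show "cball p (e1 / 2) \<subseteq> B" using e1 by (auto simp: B_def)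
    have "f holomorphic_on B" using fh e1 by (auto simp: B_def intro: holomorphic_on_subset)
    then show "(\<lambda>x. deriv f x * h x / f x) holomorphic_on B - {p}"
      using hh e1 e by (auto simp: B_def intro!: holomorphic_intros holomorphic_deriv intro: holomorphic_on_subset)
  qed
  then have "contour_integral (circlepath p (e1/2)) (\<lambda>x. deriv f x * h x / f x) = 2 * pi * \<i> * residue (\<lambda>x. deriv f x * h x / f x) p"
    by (rule contour_integral_unique)
  with AP2 show ?thesis by simp
qed



lemma local_bound:
  assumes U: "open U" and fh: "f holomorphic_on U"
    and R: "r > 0" "r < R" "cball s R \<subseteq> U"
    and fin: "finite {z\<in>cball s R. f z = 0}"
    and fs: "f s \<noteq> 0"
    and mu: "\<mu> > 0" "\<And>z. z\<in>sphere s r \<Longrightarrow> \<mu> \<le> cmod (f z)"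
    and Md: "\<And>z. z\<in>sphere s r \<Longrightarrow> cmod (deriv f z) \<le> M"
    and K: "K \<ge> 0" "\<And>z. z\<in>ball s r \<Longrightarrow> f z = 0 \<Longrightarrow> 1 / cmod (z - s) \<le> K"
  shows "cmod (deriv f s / f s) \<le> M/\<mu> + r*M/\<mu>*K"
proof -
  define S0 where "S0 = ball s R"
  define Zb where "Zb = {z\<in>S0. f z = 0}"
  define Zc where "Zc = {z\<in>cball s R. f z = 0}"
  define F where "F = (\<lambda>x. deriv f x * (1 / (x - s)) / f x)"
  define \<phi> where "\<phi> = (\<lambda>x. deriv f x / f x)"
  have ZbZc: "Zb \<subseteq> Zc" by (auto simp: Zb_def Zc_def S0_def)
  have finZb: "finite Zb" using fin ZbZc finite_subset unfolding Zc_def by blast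
  have sZb: "s \<notin> Zb" using fs by (auto simp: Zb_def)
  have S0U: "S0 \<subseteq> U" using R by (auto simp: S0_def)
  have fhS0: "f holomorphic_on S0" using fh S0U holomorphic_on_subset by blast
  have dfh: "deriv f holomorphic_on U" using fh U by (rule holomorphic_deriv)
  have M0: "0 \<le> M"
  proof -
    have "s + r \<in> sphere s r" using R by (simp add: dist_norm)
    then show ?thesis using Md[of "s + r"] by (meson norm_ge_zero order.trans)
  qed
  have sph_nz: "f z \<noteq> 0" if "z \<in> sphere s r" for z using mu(2)[of z] that mu(1) by auto
  have sph_S0: "sphere s r \<subseteq> S0" using R by (auto simp: S0_def)
  have zero_iso: "\<exists>e>0. \<forall>w\<in>ball p e - {p}. f w \<noteq> 0" if "p \<in> S0" for p
  proof -
    have "open S0" by (simp add: S0_def)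
    moreover have "finite Zc" using fin by (simp add: Zc_def)
    ultimately have "\<exists>e>0. \<forall>w\<in>ball p e. w \<in> S0 \<and> (w \<noteq> p \<longrightarrow> w \<notin> Zc)"
      using that by (rule finite_ball_avoid)
    then obtain e where "e>0" "\<forall>w\<in>ball p e. w \<in> S0 \<and> (w \<noteq> p \<longrightarrow> w \<notin> Zc)" by blast
    moreover have "w \<in> Zc" if "w \<in> S0" "f w = 0" for w using that by (auto simp: Zc_def S0_def)
    ultimately show ?thesis by (intro exI[of _ e]) blast
  qed
  have zorder_nn: "zorder f p \<ge> 0" if pS0: "p \<in> S0" for p
  proof (rule zorder_ge_0)
    show "f analytic_on {p}" by (rule holomorphic_on_imp_analytic_at[OF fhS0 _ pS0]) (simp add: S0_def)
    obtain e where e: "e>0" "\<forall>w\<in>ball p e - {p}. f w \<noteq> 0" using zero_iso[OF pS0] by blast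
    have "eventually (\<lambda>w. f w \<noteq> 0) (at p)"
      unfolding eventually_at
    proof (intro exI[of _ e] conjI ballI impI)
      show "e > 0" by (rule e(1))
      fix x assume "x \<in> UNIV" "x \<noteq> p \<and> dist x p < e"
      then have "x \<in> ball p e - {p}" by (simp add: dist_commute)
      then show "f x \<noteq> 0" using e(2) by blast
    qed
    then show "frequently (\<lambda>w. f w \<noteq> 0) (at p)" by (simp add: eventually_frequently)
  qed
  have finpts: "finite (insert s Zb)" using finZb by simp
  have openS0pts: "open (S0 - insert s Zb)" using finpts by (auto simp: S0_def intro!: open_Diff finite_imp_closed)
  have dq: "(\<lambda>x. deriv f x / f x) holomorphic_on T" if T: "T \<subseteq> S0" "\<And>z. z \<in> T \<Longrightarrow> f z \<noteq> 0" for T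
  proof (rule holomorphic_on_divide)
    show "deriv f holomorphic_on T" using dfh S0U T(1) by (meson holomorphic_on_subset order_trans)
    show "f holomorphic_on T" using fhS0 T(1) by (rule holomorphic_on_subset)
    show "\<And>z. z \<in> T \<Longrightarrow> f z \<noteq> 0" by (rule T(2))
  qed
  have nzT: "\<And>z. z \<in> S0 - insert s Zb \<Longrightarrow> f z \<noteq> 0" by (auto simp: Zb_def)
  have Fh: "F holomorphic_on S0 - insert s Zb"
  proof -
    have "(\<lambda>x. (deriv f x / f x) * (1 / (x - s))) holomorphic_on S0 - insert s Zb"
      by (intro holomorphic_on_mult dq nzT) (auto intro!: holomorphic_intros)
    moreover have "F = (\<lambda>x. (deriv f x / f x) * (1 / (x - s)))" by (simp add: F_def fun_eq_iff)
    ultimately show ?thesis by simp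
  qed
  have pimg: "path_image (circlepath s r) \<subseteq> S0 - insert s Zb"
    using R sph_S0 sph_nz by (auto simp: Zb_def)
  have homo: "\<forall>z. z \<notin> S0 \<longrightarrow> winding_number (circlepath s r) z = 0"
    using R by (auto simp: S0_def dist_eq_cmod intro!: wn_circle_out)
  have RT: "contour_integral (circlepath s r) F = 2 * pi * \<i> * (\<Sum>p\<in>insert s Zb. winding_number (circlepath s r) p * residue F p)"
    by (rule Residue_theorem[OF _ _ finpts Fh _ _ pimg homo]) (auto simp: S0_def)
  have res_s: "residue F s = \<phi> s"
  proof -
    have "F = (\<lambda>w. \<phi> w / (w - s))" by (auto simp: F_def \<phi>_def fun_eq_iff)
    moreover have "residue (\<lambda>w. \<phi> w / (w - s)) s = \<phi> s"
    proof (rule residue_simple)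
      show "open (S0 - Zc)" using fin by (auto simp: S0_def Zc_def intro!: open_Diff finite_imp_closed)
      show "s \<in> S0 - Zc" using R fs by (auto simp: S0_def Zc_def)
      show "\<phi> holomorphic_on S0 - Zc" unfolding \<phi>_def
        by (rule dq) (auto simp: Zc_def S0_def)
    qed
    ultimately show ?thesis by simp
  qed
  have res_p: "residue F p = 1 / (p - s) * of_int (zorder f p)" if pZb: "p \<in> Zb" for p
  proof -
    obtain e where e: "e>0" "\<forall>w\<in>ball p e - {p}. f w \<noteq> 0" using zero_iso pZb by (auto simp: Zb_def)
    show ?thesis unfolding F_def
    proof (rule residue_logderiv_zero[of "S0 - {s}"])
      show "open (S0 - {s})" by (auto simp: S0_def)
      show "p \<in> S0 - {s}" using pZb sZb by (auto simp: Zb_def)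
      show "f holomorphic_on S0 - {s}" using fhS0 by (rule holomorphic_on_subset) auto
      show "(\<lambda>x. 1 / (x - s)) holomorphic_on S0 - {s}" by (auto intro!: holomorphic_intros)
      show "0 < e" "\<And>w. w \<in> ball p e - {p} \<Longrightarrow> f w \<noteq> 0" using e by auto
      show "f p = 0" using pZb by (auto simp: Zb_def)
    qed
  qed
  define w where "w = (\<lambda>p. if cmod (p - s) < r then 1 else 0 :: complex)"
  have wn: "winding_number (circlepath s r) p = w p" if "p \<in> insert s Zb" for p
  proof -
    have "cmod (p - s) \<noteq> r" using that sph_nz R fs by (auto simp: Zb_def dist_eq_cmod)
    then show ?thesis unfolding w_def using R
      by (auto intro!: winding_number_circlepath wn_circle_out)
  qed
  have RT2: "contour_integral (circlepath s r) F = 2 * pi * \<i> * (\<phi> s + (\<Sum>p\<in>Zb. w p * (1 / (p - s) * of_int (zorder f p))))"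
  proof -
    have "(\<Sum>p\<in>insert s Zb. winding_number (circlepath s r) p * residue F p)
        = winding_number (circlepath s r) s * residue F s + (\<Sum>p\<in>Zb. winding_number (circlepath s r) p * residue F p)"
      using finZb sZb by simp
    also have "\<dots> = \<phi> s + (\<Sum>p\<in>Zb. w p * (1 / (p - s) * of_int (zorder f p)))"
      using R by (auto simp: res_s res_p wn w_def intro!: sum.cong)
    finally show ?thesis using RT by simp
  qed
  have pz: "{w\<in>S0. f w = 0 \<or> w \<in> {}} = Zb" by (auto simp: Zb_def)
  have AP: "contour_integral (circlepath s r) (\<lambda>x. deriv f x * 1 / f x) = 2 * pi * \<i> *
          (\<Sum>p\<in>{w\<in>S0. f w = 0 \<or> w \<in> {}}. winding_number (circlepath s r) p * 1 * zorder f p)"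
  proof (rule argument_principle)
    show "open S0" "connected S0" by (auto simp: S0_def)
    show "f holomorphic_on S0 - {}" using fhS0 by simp
    show "(\<lambda>x. 1) holomorphic_on S0" by simp
    show "valid_path (circlepath s r)" by simp
    show "pathfinish (circlepath s r) = pathstart (circlepath s r)" by simp
    show "path_image (circlepath s r) \<subseteq> S0 - {w \<in> S0. f w = 0 \<or> w \<in> {}}" unfolding pz using pimg by auto
    show "\<forall>z. z \<notin> S0 \<longrightarrow> winding_number (circlepath s r) z = 0" by (rule homo)
    show "finite {w \<in> S0. f w = 0 \<or> w \<in> {}}" unfolding pz by (rule finZb)
    show "\<forall>p\<in>S0 \<inter> {}. is_pole f p" by simp
  qed
  define N where "N = (\<Sum>p\<in>Zb. (if cmod (p - s) < r then real_of_int (zorder f p) else 0))"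
  have AP2: "contour_integral (circlepath s r) (\<lambda>x. deriv f x / f x) = 2 * pi * \<i> * of_real N"
  proof -
    have "(\<Sum>p\<in>Zb. winding_number (circlepath s r) p * 1 * zorder f p) = of_real N"
      unfolding N_def of_real_sum using wn by (auto simp: w_def intro!: sum.cong)
    then show ?thesis using AP unfolding pz by simp
  qed
  have N0: "N \<ge> 0" unfolding N_def using zorder_nn by (auto simp: Zb_def intro!: sum_nonneg)
  have bnd1: "cmod (deriv f z / f z) \<le> M / \<mu>" if "z \<in> sphere s r" for z
  proof -
    have "cmod (deriv f z / f z) = cmod (deriv f z) / cmod (f z)" by (simp add: norm_divide)
    also have "\<dots> \<le> M / \<mu>" using Md[OF that] mu(2)[OF that] mu(1) M0
      by (intro divide_mono) auto
    finally show ?thesis .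
  qed
  have intF: "F contour_integrable_on circlepath s r"
    by (rule contour_integrable_holomorphic_simple[OF Fh openS0pts]) (use pimg in auto)
  have int\<phi>: "\<phi> contour_integrable_on circlepath s r"
    unfolding \<phi>_def
    by (rule contour_integrable_holomorphic_simple[OF dq openS0pts]) (use nzT pimg in auto)
  have "cmod (contour_integral (circlepath s r) F) \<le> (M/\<mu>/r) * (2*pi*r)"
  proof (rule has_contour_integral_bound_circlepath[OF has_contour_integral_integral[OF intF]])
    show "0 \<le> M/\<mu>/r" using M0 mu R by simp
    show "0 < r" by (rule R)
    fix x assume x: "cmod (x - s) = r"
    then have "x \<in> sphere s r" by (simp add: dist_eq_cmod)
    have "cmod (F x) = cmod (deriv f x / f x) / cmod (x - s)"
      by (simp add: F_def norm_divide norm_mult)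
    also have "\<dots> = cmod (deriv f x / f x) / r" using x by simp
    also have "\<dots> \<le> (M/\<mu>) / r" using bnd1[OF \<open>x \<in> sphere s r\<close>] R(1) by (intro divide_right_mono) auto
    finally show "cmod (F x) \<le> M/\<mu>/r" .
  qed
  moreover have "(M/\<mu>/r) * (2*pi*r) = 2*pi*(M/\<mu>)" using R(1) by (simp add: field_simps)
  ultimately have I1: "cmod (contour_integral (circlepath s r) F) \<le> 2*pi*(M/\<mu>)" by simp
  have "cmod (contour_integral (circlepath s r) \<phi>) \<le> (M/\<mu>) * (2*pi*r)"
  proof (rule has_contour_integral_bound_circlepath[OF has_contour_integral_integral[OF int\<phi>]])
    show "0 \<le> M/\<mu>" using M0 mu by simp
    show "0 < r" by (rule R)
    fix x assume x: "cmod (x - s) = r"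
    then have "x \<in> sphere s r" by (simp add: dist_eq_cmod)
    then show "cmod (\<phi> x) \<le> M/\<mu>" unfolding \<phi>_def by (rule bnd1)
  qed
  then have h1: "2*pi*N \<le> (M/\<mu>) * (2*pi*r)" using AP2 N0 unfolding \<phi>_def
    by (simp add: norm_mult)
  have h2: "(M/\<mu>) * (2*pi*r) = (2*pi) * (r*M/\<mu>)" using mu(1) by (simp add: field_simps)
  have "(2*pi) * N \<le> (2*pi) * (r*M/\<mu>)" using h1 unfolding h2 .
  then have Nb: "N \<le> r*M/\<mu>" by (rule mult_left_le_imp_le) simp
  define \<Sigma> where "\<Sigma> = (\<Sum>p\<in>Zb. w p * (1 / (p - s) * of_int (zorder f p)))"
  have \<Sigma>b: "cmod \<Sigma> \<le> K * N"
  proof -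
    have "cmod \<Sigma> \<le> (\<Sum>p\<in>Zb. cmod (w p * (1 / (p - s) * of_int (zorder f p))))"
      unfolding \<Sigma>_def by (rule norm_sum)
    also have "\<dots> \<le> (\<Sum>p\<in>Zb. K * (if cmod (p - s) < r then real_of_int (zorder f p) else 0))"
    proof (rule sum_mono)
      fix p assume p: "p \<in> Zb"
      have z0: "0 \<le> zorder f p" using zorder_nn p by (auto simp: Zb_def)
      show "cmod (w p * (1 / (p - s) * of_int (zorder f p))) \<le> K * (if cmod (p - s) < r then real_of_int (zorder f p) else 0)"
      proof (cases "cmod (p - s) < r")
        case True
        then have "p \<in> ball s r" by (simp add: dist_eq_cmod)
        then have Kp: "1 / cmod (p - s) \<le> K" using K(2) p by (auto simp: Zb_def)
        have nz: "cmod (of_int (zorder f p) :: complex) = real_of_int (zorder f p)" using z0 by simp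
        have z0r: "0 \<le> real_of_int (zorder f p)" using z0 by simp
        have m1: "(1 / cmod (p - s)) * real_of_int (zorder f p) \<le> K * real_of_int (zorder f p)"
          by (rule mult_right_mono[OF Kp z0r])
        have "cmod (w p * (1 / (p - s) * of_int (zorder f p))) = (1 / cmod (p - s)) * cmod (of_int (zorder f p) :: complex)"
          using True by (simp only: w_def if_True mult_1_left norm_mult norm_divide norm_one)
        also have "\<dots> = (1 / cmod (p - s)) * real_of_int (zorder f p)" by (simp only: nz)
        also have "\<dots> \<le> K * real_of_int (zorder f p)" by (rule m1)
        finally show ?thesis using True by simp
      qed (simp add: w_def)
    qed
    also have "\<dots> = K * N" unfolding N_def by (simp add: sum_distrib_left)
    finally show ?thesis .
  qed
  have "\<phi> s = contour_integral (circlepath s r) F / (2 * pi * \<i>) - \<Sigma>"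
    using RT2 unfolding \<Sigma>_def by simp
  moreover have "cmod (contour_integral (circlepath s r) F / (2 * pi * \<i>)) = cmod (contour_integral (circlepath s r) F) / (2*pi)"
    by (simp add: norm_divide norm_mult)
  ultimately have "cmod (\<phi> s) \<le> cmod (contour_integral (circlepath s r) F) / (2*pi) + cmod \<Sigma>"
    using norm_triangle_ineq4[of "contour_integral (circlepath s r) F / (2 * pi * \<i>)" \<Sigma>] by simp
  also have "\<dots> \<le> M/\<mu> + K * N"
  proof -
    have "cmod (contour_integral (circlepath s r) F) / (2*pi) \<le> (2*pi*(M/\<mu>)) / (2*pi)"
      by (rule divide_right_mono[OF I1]) simp
    also have "(2*pi*(M/\<mu>)) / (2*pi) = M/\<mu>" by simp
    finally show ?thesis using \<Sigma>b by linarith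
  qed
  also have "\<dots> \<le> M/\<mu> + K * (r*M/\<mu>)" using mult_left_mono[OF Nb K(1)] by linarith
  also have "\<dots> = M/\<mu> + r*M/\<mu>*K" by (simp only: mult.commute)
  finally show ?thesis by (simp only: \<phi>_def)
qed



lemma ap_bounded:
  assumes ap: "almost_periodic_on (strip \<alpha> \<beta>) f" and cont: "continuous_on (strip \<alpha> \<beta>) f"
    and ab: "\<alpha> < a" "a \<le> b" "b < \<beta>"
  shows "\<exists>M. \<forall>z. a \<le> Re z \<and> Re z \<le> b \<longrightarrow> cmod (f z) \<le> M"
proof -
  have "relatively_dense {\<tau>::real. \<forall>s\<in>strip \<alpha> \<beta>. cmod (f (s + \<i> * of_real \<tau>) - f s) \<le> 1}"
    using ap unfolding almost_periodic_on_def by simp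
  then obtain L where L: "L > 0" "\<And>x. \<exists>\<tau>. (\<forall>s\<in>strip \<alpha> \<beta>. cmod (f (s + \<i> * of_real \<tau>) - f s) \<le> 1) \<and> x \<le> \<tau> \<and> \<tau> \<le> x + L"
    unfolding relatively_dense_def by auto
  define Rc where "Rc = cbox (Complex a 0) (Complex b L)"
  have memR: "z \<in> Rc \<longleftrightarrow> a \<le> Re z \<and> Re z \<le> b \<and> 0 \<le> Im z \<and> Im z \<le> L" for z
    by (auto simp: Rc_def mem_box Basis_complex_def)
  have RS: "Rc \<subseteq> strip \<alpha> \<beta>" using ab by (auto simp: memR strip_def)
  have "compact (f ` Rc)" unfolding Rc_def
    by (rule compact_continuous_image) (use cont RS in \<open>auto simp: Rc_def intro: continuous_on_subset\<close>)
  then obtain M0 where M0: "\<And>z. z \<in> Rc \<Longrightarrow> cmod (f z) \<le> M0"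
    by (meson bounded_iff compact_imp_bounded image_eqI)
  show ?thesis
  proof (intro exI[of _ "M0 + 1"] allI impI)
    fix z assume z: "a \<le> Re z \<and> Re z \<le> b"
    obtain \<tau> where \<tau>: "\<forall>s\<in>strip \<alpha> \<beta>. cmod (f (s + \<i> * of_real \<tau>) - f s) \<le> 1" "Im z - L \<le> \<tau>" "\<tau> \<le> Im z"
      using L(2)[of "Im z - L"] by auto
    define z' where "z' = z - \<i> * of_real \<tau>"
    have z'R: "z' \<in> Rc" using z \<tau> by (auto simp: memR z'_def)
    then have "z' \<in> strip \<alpha> \<beta>" using RS by auto
    then have "cmod (f (z' + \<i> * of_real \<tau>) - f z') \<le> 1" using \<tau>(1) by auto
    moreover have "z' + \<i> * of_real \<tau> = z" by (simp add: z'_def)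
    ultimately have "cmod (f z - f z') \<le> 1" by simp
    then show "cmod (f z) \<le> M0 + 1" using M0[OF z'R] norm_triangle_sub[of "f z" "f z'"] by linarith
  qed
qed

lemma strip_open: "open (strip a b)"
  unfolding strip_def by (intro open_Collect_conj open_halfspace_Re_gt open_halfspace_Re_lt)

lemma strip_connected: "connected (strip a b)"
proof -
  have "strip a b = {x. Re x > a} \<inter> {x. Re x < b}" by (auto simp: strip_def)
  then have "convex (strip a b)" by (simp add: convex_Int convex_halfspace_Re_gt convex_halfspace_Re_lt)
  then show ?thesis by (rule convex_connected)
qed

lemma uniform_circles:
  assumes hol: "f holomorphic_on strip \<alpha> \<beta>" and ap: "almost_periodic_on (strip \<alpha> \<beta>) f"
    and p0: "p0 \<in> strip \<alpha> \<beta>" "f p0 \<noteq> 0" and d: "\<delta> > 0" "\<alpha> + \<delta> < \<beta> - \<delta>"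
  shows "\<exists>\<mu>>0. \<forall>s\<in>strip (\<alpha>+\<delta>) (\<beta>-\<delta>). \<exists>r. \<delta>/4 \<le> r \<and> r \<le> \<delta>/2 \<and> (\<forall>z\<in>sphere s r. \<mu> \<le> cmod (f z))"
proof (rule ccontr)
  assume H: "\<not> ?thesis"
  have "\<forall>n::nat. \<exists>s. s \<in> strip (\<alpha>+\<delta>) (\<beta>-\<delta>) \<and> (\<forall>r. \<delta>/4 \<le> r \<and> r \<le> \<delta>/2 \<longrightarrow> (\<exists>z\<in>sphere s r. cmod (f z) < 1 / real (Suc n)))"
  proof
    fix n :: nat
    have "1 / real (Suc n) > 0" by simp
    then have "\<not> (\<forall>s\<in>strip (\<alpha>+\<delta>) (\<beta>-\<delta>). \<exists>r. \<delta>/4 \<le> r \<and> r \<le> \<delta>/2 \<and> (\<forall>z\<in>sphere s r. 1 / real (Suc n) \<le> cmod (f z)))"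
      using H by blast
    then obtain s where s1: "s \<in> strip (\<alpha>+\<delta>) (\<beta>-\<delta>)"
      and s2: "\<And>r. \<not> (\<delta>/4 \<le> r \<and> r \<le> \<delta>/2 \<and> (\<forall>z\<in>sphere s r. 1 / real (Suc n) \<le> cmod (f z)))" by blast
    have "\<exists>z\<in>sphere s r. cmod (f z) < 1 / real (Suc n)" if "\<delta>/4 \<le> r" "r \<le> \<delta>/2" for r
    proof -
      have "\<not> (\<forall>z\<in>sphere s r. 1 / real (Suc n) \<le> cmod (f z))" using s2[of r] that by blast
      then show ?thesis by (auto simp: not_le)
    qed
    then show "\<exists>s. s \<in> strip (\<alpha>+\<delta>) (\<beta>-\<delta>) \<and> (\<forall>r. \<delta>/4 \<le> r \<and> r \<le> \<delta>/2 \<longrightarrow> (\<exists>z\<in>sphere s r. cmod (f z) < 1 / real (Suc n)))"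
      using s1 by blast
  qed
  then obtain s where s: "\<And>n. s n \<in> strip (\<alpha>+\<delta>) (\<beta>-\<delta>)"
    and sr: "\<And>n r. \<delta>/4 \<le> r \<Longrightarrow> r \<le> \<delta>/2 \<Longrightarrow> \<exists>z\<in>sphere (s n) r. cmod (f z) < 1 / real (Suc n)"
  proof -
    assume th: "\<And>s. (\<And>n. s n \<in> strip (\<alpha>+\<delta>) (\<beta>-\<delta>)) \<Longrightarrow> (\<And>n r. \<delta>/4 \<le> r \<Longrightarrow> r \<le> \<delta>/2 \<Longrightarrow> \<exists>z\<in>sphere (s n) r. cmod (f z) < 1 / real (Suc n)) \<Longrightarrow> thesis"
    assume ex: "\<forall>n::nat. \<exists>s. s \<in> strip (\<alpha>+\<delta>) (\<beta>-\<delta>) \<and> (\<forall>r. \<delta>/4 \<le> r \<and> r \<le> \<delta>/2 \<longrightarrow> (\<exists>z\<in>sphere s r. cmod (f z) < 1 / real (Suc n)))"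
    obtain s where sP: "\<forall>n. s n \<in> strip (\<alpha>+\<delta>) (\<beta>-\<delta>) \<and> (\<forall>r. \<delta>/4 \<le> r \<and> r \<le> \<delta>/2 \<longrightarrow> (\<exists>z\<in>sphere (s n) r. cmod (f z) < 1 / real (Suc n)))"
      using choice[OF ex] by blast
    show thesis
    proof (rule th)
      show "s n \<in> strip (\<alpha>+\<delta>) (\<beta>-\<delta>)" for n using sP by blast
      show "\<exists>z\<in>sphere (s n) r. cmod (f z) < 1 / real (Suc n)" if "\<delta>/4 \<le> r" "r \<le> \<delta>/2" for n r
        using sP that by blast
    qed
  qed
  have "seq_compact {\<alpha>+\<delta>..\<beta>-\<delta>}" by (simp add: compact_imp_seq_compact)
  moreover have "\<forall>n. Re (s n) \<in> {\<alpha>+\<delta>..\<beta>-\<delta>}" using s by (auto simp: strip_def less_imp_le)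
  ultimately obtain l r1 where l: "l \<in> {\<alpha>+\<delta>..\<beta>-\<delta>}" and r1: "strict_mono r1"
    and lim1: "((\<lambda>n. Re (s n)) \<circ> r1) \<longlonglongrightarrow> l"
    by (rule seq_compactE)
  define \<eta> where "\<eta> = min (\<delta>/4) (min ((Re p0 - \<alpha>)/2) ((\<beta> - Re p0)/2))"
  have \<eta>: "\<eta> > 0" "\<eta> \<le> \<delta>/4" "\<alpha> + \<eta> < Re p0" "Re p0 < \<beta> - \<eta>"
  proof -
    have a1: "\<alpha> < Re p0" "Re p0 < \<beta>" using p0 by (auto simp: strip_def)
    have "\<eta> \<le> (Re p0 - \<alpha>)/2" "\<eta> \<le> (\<beta> - Re p0)/2" "\<eta> \<le> \<delta>/4" by (simp_all add: \<eta>_def min_def)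
    moreover have "\<eta> > 0" using a1 d by (simp add: \<eta>_def)
    ultimately show "\<eta> > 0" "\<eta> \<le> \<delta>/4" "\<alpha> + \<eta> < Re p0" "Re p0 < \<beta> - \<eta>" using a1 by auto
  qed
  define S where "S = strip (\<alpha>+\<eta>) (\<beta>-\<eta>)"
  have S_sub: "S \<subseteq> strip \<alpha> \<beta>" using \<eta> by (auto simp: S_def strip_def)
  have p0S: "p0 \<in> S" using \<eta> by (auto simp: S_def strip_def)
  obtain M where M: "\<And>z. \<alpha>+\<eta> \<le> Re z \<Longrightarrow> Re z \<le> \<beta>-\<eta> \<Longrightarrow> cmod (f z) \<le> M"
    using ap_bounded[OF ap holomorphic_on_imp_continuous_on[OF hol], of "\<alpha>+\<eta>" "\<beta>-\<eta>"] \<eta> d by auto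
  define G where "G = (\<lambda>n z. f (z + \<i> * of_real (Im (s (r1 n)))))"
  have shift_strip: "z + \<i> * of_real t \<in> strip a b \<longleftrightarrow> z \<in> strip a b" for z t a b
    by (simp add: strip_def)
  have Gh: "G n holomorphic_on S" for n
  proof -
    have "f holomorphic_on (\<lambda>z. z + \<i> * of_real (Im (s (r1 n)))) ` S"
      by (rule holomorphic_on_subset[OF hol]) (use S_sub in \<open>auto simp: shift_strip\<close>)
    then have "(f \<circ> (\<lambda>z. z + \<i> * of_real (Im (s (r1 n))))) holomorphic_on S"
      by (intro holomorphic_on_compose) (auto intro!: holomorphic_intros)
    then show ?thesis by (simp add: G_def o_def)
  qed
  have GM: "cmod (G n z) \<le> M" if "z \<in> S" for n z
    using that by (auto simp: G_def S_def strip_def intro!: M)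
  obtain g r2 where gh: "g holomorphic_on S" and r2: "strict_mono r2"
    and gul: "\<And>K. compact K \<Longrightarrow> K \<subseteq> S \<Longrightarrow> uniform_limit K (G \<circ> r2) g sequentially"
  proof (rule Montel[of S "{h. h holomorphic_on S \<and> (\<forall>z\<in>S. cmod (h z) \<le> M)}" G])
    show "open S" by (simp add: S_def strip_open)
    show "\<exists>B. \<forall>h\<in>{h. h holomorphic_on S \<and> (\<forall>z\<in>S. cmod (h z) \<le> M)}. \<forall>z\<in>K. cmod (h z) \<le> B"
      if "compact K" "K \<subseteq> S" for K
      using that by (intro exI[of _ M]) blast
  qed (use Gh GM in auto)
  define c where "c = cmod (f p0) / 2"
  have c: "c > 0" using p0 by (simp add: c_def)
  have "relatively_dense {\<tau>::real. \<forall>s\<in>strip \<alpha> \<beta>. cmod (f (s + \<i> * of_real \<tau>) - f s) \<le> c}"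
    using ap c unfolding almost_periodic_on_def by simp
  then obtain L where L: "L > 0" "\<And>x. \<exists>\<tau>. (\<forall>s\<in>strip \<alpha> \<beta>. cmod (f (s + \<i> * of_real \<tau>) - f s) \<le> c) \<and> x \<le> \<tau> \<and> \<tau> \<le> x + L"
    unfolding relatively_dense_def by auto
  define W where "W = (\<lambda>t. p0 + \<i> * of_real t) ` {-L..0}"
  have Wc: "compact W" unfolding W_def
    by (intro compact_continuous_image continuous_intros) auto
  have WS: "W \<subseteq> S" using p0S by (auto simp: W_def S_def strip_def)
  have Wbig: "\<exists>w\<in>W. cmod (G (r2 n) w) \<ge> c" for n
  proof -
    define y where "y = Im (s (r1 (r2 n)))"
    obtain \<tau> where \<tau>: "\<forall>s\<in>strip \<alpha> \<beta>. cmod (f (s + \<i> * of_real \<tau>) - f s) \<le> c" "y - L \<le> \<tau>" "\<tau> \<le> y"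
      using L(2)[of "y - L"] by auto
    define w where "w = p0 + \<i> * of_real (\<tau> - y)"
    have "w \<in> W" unfolding W_def w_def using \<tau> by (intro imageI) auto
    have eqG: "G (r2 n) w = f (p0 + \<i> * of_real \<tau>)"
      by (simp add: G_def w_def y_def algebra_simps)
    have "cmod (f (p0 + \<i> * of_real \<tau>) - f p0) \<le> c" using \<tau>(1) p0 by auto
    moreover have "cmod (f p0) - cmod (f (p0 + \<i> * of_real \<tau>)) \<le> cmod (f (p0 + \<i> * of_real \<tau>) - f p0)"
      using norm_triangle_ineq2[of "f p0" "f (p0 + \<i> * of_real \<tau>)"] by (simp add: norm_minus_commute)
    ultimately have "c \<le> cmod (f (p0 + \<i> * of_real \<tau>))" unfolding c_def by linarith
    then have "cmod (G (r2 n) w) \<ge> c" by (simp add: eqG)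
    then show ?thesis using \<open>w \<in> W\<close> by blast
  qed
  have gnz: "\<exists>w0\<in>S. g w0 \<noteq> 0"
  proof (rule ccontr)
    assume "\<not> ?thesis"
    then have g0: "\<And>w. w \<in> W \<Longrightarrow> g w = 0" using WS by auto
    have "\<forall>\<^sub>F n in sequentially. \<forall>x\<in>W. dist ((G \<circ> r2) n x) (g x) < c"
      using uniform_limitD[OF gul[OF Wc WS] c] .
    then obtain N where "\<forall>n\<ge>N. \<forall>x\<in>W. dist ((G \<circ> r2) n x) (g x) < c"
      unfolding eventually_sequentially by blast
    then have hN: "\<forall>x\<in>W. cmod (G (r2 N) x) < c" using g0 by (simp add: dist_norm)
    obtain w where "w \<in> W" "cmod (G (r2 N) w) \<ge> c" using Wbig[of N] by blast
    then show False using hN by fastforce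
  qed
  then obtain w0 where w0: "w0 \<in> S" "g w0 \<noteq> 0" by blast
  define \<sigma> where "\<sigma> = complex_of_real l"
  have cb_S: "cball \<sigma> (\<delta>/2 + \<delta>/8) \<subseteq> S"
  proof
    fix z assume "z \<in> cball \<sigma> (\<delta>/2 + \<delta>/8)"
    then have "cmod (z - \<sigma>) \<le> \<delta>/2 + \<delta>/8" by (metis dist_commute dist_norm mem_cball)
    then have "\<bar>Re z - l\<bar> \<le> \<delta>/2 + \<delta>/8" using abs_Re_le_cmod[of "z - \<sigma>"] by (simp add: \<sigma>_def)
    moreover have "Re z - l \<le> \<bar>Re z - l\<bar>" "-(Re z - l) \<le> \<bar>Re z - l\<bar>" by (rule abs_ge_self, rule abs_ge_minus_self)
    ultimately have "l - (\<delta>/2 + \<delta>/8) \<le> Re z" "Re z \<le> l + (\<delta>/2 + \<delta>/8)" by linarith+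
    moreover have "\<alpha> + \<delta> \<le> l" "l \<le> \<beta> - \<delta>" using l by auto
    ultimately have "\<alpha> + \<eta> < Re z" "Re z < \<beta> - \<eta>" using \<eta> d by linarith+
    then show "z \<in> S" by (simp add: S_def strip_def)
  qed
  have cbs2: "cball \<sigma> (\<delta>/2) \<subseteq> S"
  proof -
    have "cball \<sigma> (\<delta>/2) \<subseteq> cball \<sigma> (\<delta>/2 + \<delta>/8)" using d by (intro subset_cball) simp
    then show ?thesis using cb_S by (rule order_trans)
  qed
  have fing: "finite {z\<in>cball \<sigma> (\<delta>/2). g z = 0}"
  proof (cases "g constant_on S")
    case True
    then obtain c0 where c0: "\<And>z. z \<in> S \<Longrightarrow> g z = c0" unfolding constant_on_def by blast
    have "g z \<noteq> 0" if "z \<in> S" for z using c0[OF that] c0[OF w0(1)] w0(2) by simp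
    then have "{z\<in>cball \<sigma> (\<delta>/2). g z = 0} = {}" using cbs2 by blast
    then show ?thesis by (simp only: finite.emptyI)
  next
    case False
    have "open S" "connected S" by (simp_all add: S_def strip_open strip_connected)
    then show ?thesis
      by (intro holomorphic_compact_finite_zeros[OF gh _ _ _ cbs2 False]) auto
  qed
  obtain r where r: "\<delta>/4 \<le> r" "r \<le> \<delta>/2" "\<And>z. z \<in> sphere \<sigma> r \<Longrightarrow> g z \<noteq> 0"
  proof -
    define Z where "Z = {z\<in>cball \<sigma> (\<delta>/2). g z = 0}"
    have "finite ((\<lambda>z. dist \<sigma> z) ` Z)" using fing by (simp add: Z_def)
    moreover have "infinite {\<delta>/4..\<delta>/2}" using d by simp
    ultimately have "\<not> {\<delta>/4..\<delta>/2} \<subseteq> (\<lambda>z. dist \<sigma> z) ` Z" using finite_subset by blast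
    then obtain r where r1: "r \<in> {\<delta>/4..\<delta>/2}" and r2: "r \<notin> (\<lambda>z. dist \<sigma> z) ` Z" by blast
    have "g z \<noteq> 0" if "z \<in> sphere \<sigma> r" for z
    proof
      assume "g z = 0"
      moreover have "dist \<sigma> z = r" using that by simp
      moreover have "z \<in> cball \<sigma> (\<delta>/2)" using r1 \<open>dist \<sigma> z = r\<close> by simp
      ultimately have "r \<in> (\<lambda>z. dist \<sigma> z) ` Z" unfolding Z_def by blast
      then show False using r2 by blast
    qed
    moreover have "\<delta>/4 \<le> r" "r \<le> \<delta>/2" using r1 by auto
    ultimately show ?thesis using that by blast
  qed
  have sph_ne: "sphere \<sigma> r \<noteq> {}" using r d by simp
  have gcont: "continuous_on S g" using gh by (rule holomorphic_on_imp_continuous_on)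
  have sphS: "sphere \<sigma> r \<subseteq> S" using cbs2 r(2) by (meson order_trans sphere_cball subset_cball)
  have "continuous_on (sphere \<sigma> r) (\<lambda>z. cmod (g z))"
    by (rule continuous_on_norm[OF continuous_on_subset[OF gcont sphS]])
  then obtain z0 where z0: "z0 \<in> sphere \<sigma> r" "\<And>z. z \<in> sphere \<sigma> r \<Longrightarrow> cmod (g z0) \<le> cmod (g z)"
    using continuous_attains_inf[OF compact_sphere sph_ne] by blast
  define m where "m = cmod (g z0)"
  have m: "m > 0" using r(3)[OF z0(1)] by (simp add: m_def)
  define K1 where "K1 = cball \<sigma> (\<delta>/2 + \<delta>/8)"
  have K1c: "compact K1" by (simp add: K1_def)
  have K1S: "K1 \<subseteq> S" using cb_S by (simp add: K1_def)
  have "uniformly_continuous_on K1 g"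
    using compact_uniformly_continuous[OF continuous_on_subset[OF gcont K1S] K1c] .
  moreover have "m/4 > 0" using m by simp
  ultimately obtain dd where dd0: "dd > 0" and dd1: "\<forall>x\<in>K1. \<forall>y\<in>K1. dist y x < dd \<longrightarrow> dist (g y) (g x) < m/4"
    unfolding uniformly_continuous_on_def by blast
  have dd: "dd > 0" "\<And>x y. x \<in> K1 \<Longrightarrow> y \<in> K1 \<Longrightarrow> dist y x < dd \<Longrightarrow> dist (g y) (g x) < m/4"
    using dd0 dd1 by blast+
  have E1: "\<forall>\<^sub>F n in sequentially. \<forall>x\<in>K1. dist ((G \<circ> r2) n x) (g x) < m/4"
    using uniform_limitD[OF gul[OF K1c K1S], of "m/4"] m by (simp only: zero_less_divide_iff zero_less_numeral simp_thms)
  have lim2: "(\<lambda>n. Re (s (r1 (r2 n)))) \<longlonglongrightarrow> l"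
    using LIMSEQ_subseq_LIMSEQ[OF lim1 r2] by (simp add: o_def)
  have E2: "\<forall>\<^sub>F n in sequentially. dist (Re (s (r1 (r2 n)))) l < min dd (\<delta>/8)"
  proof -
    have "min dd (\<delta>/8) > 0" using dd(1) d(1) by simp
    then show ?thesis using lim2 unfolding tendsto_iff by blast
  qed
  obtain N :: nat where N: "1 / real (Suc N) < m/4"
  proof -
    obtain N where "inverse (real (Suc N)) < m/4" using reals_Archimedean[of "m/4"] m by auto
    then show ?thesis using that by (simp add: inverse_eq_divide)
  qed
  have E3: "\<forall>\<^sub>F n in sequentially. n \<ge> N" by (simp add: eventually_ge_at_top)
  obtain n where n1: "\<forall>x\<in>K1. dist ((G \<circ> r2) n x) (g x) < m/4"
    and n2: "dist (Re (s (r1 (r2 n)))) l < min dd (\<delta>/8)" and n3: "n \<ge> N"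
    using eventually_happens'[OF _ eventually_conj[OF E1 eventually_conj[OF E2 E3]]] by auto
  define k where "k = r1 (r2 n)"
  have "n \<le> k" unfolding k_def using seq_suble[OF strict_mono_o[OF r1 r2]] by (simp add: o_def)
  then have kN: "1 / real (Suc k) \<le> 1 / real (Suc N)" using n3 by (simp add: frac_le)
  obtain z where z: "z \<in> sphere (s k) r" "cmod (f z) < 1 / real (Suc k)"
    using sr[OF r(1) r(2), of k] by blast
  define y where "y = Im (s k)"
  define \<sigma>n where "\<sigma>n = complex_of_real (Re (s k))"
  define z' where "z' = z - \<i> * of_real y"
  have sk: "s k = \<sigma>n + \<i> * of_real y" by (simp add: \<sigma>n_def y_def complex_eq_iff)
  have z'sph: "dist \<sigma>n z' = r" using z(1) by (simp add: z'_def sk dist_norm algebra_simps)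
  have Gz': "(G \<circ> r2) n z' = f z" by (simp add: G_def z'_def y_def k_def)
  have "dist \<sigma>n \<sigma> = dist (Re (s k)) l"
    by (simp add: \<sigma>n_def \<sigma>_def dist_norm dist_real_def flip: of_real_diff)
  then have d\<sigma>: "dist \<sigma>n \<sigma> < min dd (\<delta>/8)" using n2 by (simp only: k_def)
  define \<zeta> where "\<zeta> = z' - \<sigma>n + \<sigma>"
  have \<zeta>sph: "\<zeta> \<in> sphere \<sigma> r" using z'sph by (simp add: \<zeta>_def dist_norm algebra_simps)
  have "dist \<zeta> z' = dist \<sigma> \<sigma>n" by (simp add: \<zeta>_def dist_norm)
  then have dz: "dist \<zeta> z' < dd" using d\<sigma> by (simp add: dist_commute)
  have z'K1: "z' \<in> K1"
  proof -
    have "dist \<sigma> z' \<le> dist \<sigma> \<sigma>n + dist \<sigma>n z'" by (rule dist_triangle)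
    then show ?thesis using d\<sigma> z'sph r by (simp add: K1_def dist_commute)
  qed
  have \<zeta>K1: "\<zeta> \<in> K1" using \<zeta>sph r by (simp add: K1_def)
  have "m \<le> cmod (g \<zeta>)" using z0(2)[OF \<zeta>sph] by (simp add: m_def)
  moreover have "dist (g \<zeta>) (g z') < m/4" using dd(2)[OF z'K1 \<zeta>K1 dz] .
  moreover have "dist (f z) (g z') < m/4" using n1 z'K1 Gz' by auto
  moreover have "cmod (f z) < m/4" using z(2) kN N by linarith
  moreover have "cmod (g \<zeta>) \<le> cmod (g z') + dist (g \<zeta>) (g z')"
    using norm_triangle_sub[of "g \<zeta>" "g z'"] by (simp add: dist_norm)
  moreover have "cmod (g z') \<le> cmod (f z) + dist (f z) (g z')"
    using norm_triangle_sub[of "g z'" "f z"] by (simp add: dist_norm norm_minus_commute)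
  ultimately show False using m by linarith
qed



theorem lemma3p4:
  fixes f :: "complex \<Rightarrow> complex" and \<alpha> \<beta> :: real
  assumes "\<alpha> < \<beta>"
    and "f analytic_on strip \<alpha> \<beta>"
    and "almost_periodic_on (strip \<alpha> \<beta>) f"
    and "\<exists>s\<in>strip \<alpha> \<beta>. f s \<noteq> 0"
  shows "\<forall>\<delta>>0. \<exists>A B :: real. \<forall>s\<in>strip (\<alpha> + \<delta>) (\<beta> - \<delta>). f s \<noteq> 0 \<longrightarrow>
           cmod (deriv f s / f s) \<le>
             (if zero_set (strip \<alpha> \<beta>) f = {} then A
              else A + B / infdist s (zero_set (strip \<alpha> \<beta>) f))"
proof (intro allI impI)
  fix \<delta> :: real assume d0: "\<delta> > 0"
  define Z where "Z = zero_set (strip \<alpha> \<beta>) f"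
  show "\<exists>A B :: real. \<forall>s\<in>strip (\<alpha> + \<delta>) (\<beta> - \<delta>). f s \<noteq> 0 \<longrightarrow>
           cmod (deriv f s / f s) \<le>
             (if zero_set (strip \<alpha> \<beta>) f = {} then A
              else A + B / infdist s (zero_set (strip \<alpha> \<beta>) f))"
  proof (cases "\<alpha> + \<delta> < \<beta> - \<delta>")
    case False
    then have "strip (\<alpha> + \<delta>) (\<beta> - \<delta>) = {}" by (auto simp: strip_def)
    then show ?thesis by auto
  next
    case True
    have hol: "f holomorphic_on strip \<alpha> \<beta>" using assms(2) by (rule analytic_imp_holomorphic)
    obtain p0 where p0: "p0 \<in> strip \<alpha> \<beta>" "f p0 \<noteq> 0" using assms(4) by blast
    obtain \<mu> where mu: "\<mu> > 0" and mus: "\<And>s. s\<in>strip (\<alpha>+\<delta>) (\<beta>-\<delta>) \<Longrightarrow> \<exists>r. \<delta>/4 \<le> r \<and> r \<le> \<delta>/2 \<and> (\<forall>z\<in>sphere s r. \<mu> \<le> cmod (f z))"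
      using uniform_circles[OF hol assms(3) p0 d0 True] by blast
    obtain M where M: "\<And>z. \<alpha> + \<delta>/4 \<le> Re z \<Longrightarrow> Re z \<le> \<beta> - \<delta>/4 \<Longrightarrow> cmod (f z) \<le> M"
      using ap_bounded[OF assms(3) holomorphic_on_imp_continuous_on[OF hol], of "\<alpha> + \<delta>/4" "\<beta> - \<delta>/4"] True d0 by auto
    define M' where "M' = M / (\<delta>/4)"
    define A where "A = M' / \<mu>"
    define B where "B = \<delta>/2 * M' / \<mu>"
    have fin_all: "finite {z\<in>K. f z = 0}" if "compact K" "K \<subseteq> strip \<alpha> \<beta>" for K
    proof (cases "f constant_on strip \<alpha> \<beta>")
      case True
      then obtain c0 where c0: "\<And>z. z \<in> strip \<alpha> \<beta> \<Longrightarrow> f z = c0" unfolding constant_on_def by blast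
      have "f z \<noteq> 0" if "z \<in> strip \<alpha> \<beta>" for z using c0[OF that] c0[OF p0(1)] p0(2) by simp
      then have "{z\<in>K. f z = 0} = {}" using that by blast
      then show ?thesis by (simp only: finite.emptyI)
    next
      case False
      show ?thesis
        by (rule holomorphic_compact_finite_zeros[OF hol strip_open strip_connected that False])
    qed
    show ?thesis
    proof (rule exI[of _ A], rule exI[of _ B], intro ballI impI)
      fix s assume s: "s \<in> strip (\<alpha> + \<delta>) (\<beta> - \<delta>)" and fs: "f s \<noteq> 0"
      have Res: "\<alpha> + \<delta> < Re s" "Re s < \<beta> - \<delta>" using s by (auto simp: strip_def)
      obtain r where r: "\<delta>/4 \<le> r" "r \<le> \<delta>/2" "\<And>z. z\<in>sphere s r \<Longrightarrow> \<mu> \<le> cmod (f z)"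
        using mus[OF s] by blast
      have "\<alpha> + \<delta>/4 \<le> Re s" "Re s \<le> \<beta> - \<delta>/4" using Res d0 by linarith+
      then have M0: "0 \<le> M" using M[of s] norm_ge_zero[of "f s"] by linarith
      have nearRe: "\<alpha> + \<delta>/4 \<le> Re x \<and> Re x \<le> \<beta> - \<delta>/4" if "cmod (x - s) \<le> 3*\<delta>/4" for x
      proof -
        have "\<bar>Re x - Re s\<bar> \<le> 3*\<delta>/4" using abs_Re_le_cmod[of "x - s"] that by simp
        moreover have "Re x - Re s \<le> \<bar>Re x - Re s\<bar>" "-(Re x - Re s) \<le> \<bar>Re x - Re s\<bar>" by (rule abs_ge_self, rule abs_ge_minus_self)
        ultimately show ?thesis using Res by linarith
      qed
      have inStrip: "x \<in> strip \<alpha> \<beta>" if "cmod (x - s) \<le> 3*\<delta>/4" for x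
        using nearRe[OF that] d0 by (auto simp: strip_def)
      define R where "R = r + \<delta>/4"
      have rpos: "r > 0" using r d0 by linarith
      have cbR: "cball s R \<subseteq> strip \<alpha> \<beta>"
      proof
        fix x assume "x \<in> cball s R"
        then have "cmod (x - s) \<le> 3*\<delta>/4" using r unfolding R_def by (simp add: dist_eq_cmod)
        then show "x \<in> strip \<alpha> \<beta>" by (rule inStrip)
      qed
      have dbound: "cmod (deriv f z) \<le> M'" if z: "z \<in> sphere s r" for z
      proof -
        have zs: "cmod (z - s) = r" using z by (simp add: dist_eq_cmod)
        have cbz: "cball z (\<delta>/4) \<subseteq> strip \<alpha> \<beta>"
        proof
          fix x assume "x \<in> cball z (\<delta>/4)"
          then have "cmod (x - z) \<le> \<delta>/4" by (simp add: dist_eq_cmod)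
          then have "cmod (x - s) \<le> 3*\<delta>/4" using norm_triangle_ineq[of "x - z" "z - s"] zs r by simp
          then show "x \<in> strip \<alpha> \<beta>" by (rule inStrip)
        qed
        have "cmod ((deriv ^^ 1) f z) \<le> fact 1 * M / (\<delta>/4) ^ 1"
        proof (rule Cauchy_inequality)
          show "f holomorphic_on ball z (\<delta> / 4)" using hol cbz ball_subset_cball by (meson holomorphic_on_subset order_trans)
          show "continuous_on (cball z (\<delta> / 4)) f" using holomorphic_on_imp_continuous_on[OF hol] cbz by (rule continuous_on_subset)
          show "0 < \<delta> / 4" using d0 by simp
          fix x assume x: "cmod (z - x) = \<delta> / 4"
          then have "cmod (x - z) = \<delta>/4" by (metis norm_minus_commute)
          then have "cmod (x - s) \<le> 3*\<delta>/4" using norm_triangle_ineq[of "x - z" "z - s"] zs r by simp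
          then show "cmod (f x) \<le> M" using nearRe M by blast
        qed
        then show ?thesis by (simp add: M'_def)
      qed
      define K where "K = (if Z = {} then 0 else 1 / infdist s Z)"
      have ipos: "infdist s Z > 0" if "Z \<noteq> {}"
      proof (rule ccontr)
        assume "\<not> infdist s Z > 0"
        then have "infdist s Z = 0" using infdist_nonneg[of s Z] by linarith
        then have "s \<in> closure Z" using in_closure_iff_infdist_zero[OF that] by simp
        have "continuous_on (strip \<alpha> \<beta>) f" using hol by (rule holomorphic_on_imp_continuous_on)
        moreover have "s \<in> strip \<alpha> \<beta>" using inStrip[of s] d0 by simp
        ultimately obtain e where e: "e > 0" "\<And>y. y \<in> strip \<alpha> \<beta> \<Longrightarrow> dist y s < e \<Longrightarrow> dist (f y) (f s) < cmod (f s)"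
          using fs unfolding continuous_on_iff by (metis zero_less_norm_iff)
        obtain y where y: "y \<in> Z" "dist y s < e" using \<open>s \<in> closure Z\<close> e(1) closure_approachable by blast
        then have "y \<in> strip \<alpha> \<beta>" "f y = 0" by (auto simp: Z_def zero_set_def)
        then show False using e(2)[of y] y(2) by simp
      qed
      have K0: "K \<ge> 0" by (simp add: K_def infdist_nonneg)
      have Kb: "1 / cmod (z - s) \<le> K" if "z \<in> ball s r" "f z = 0" for z
      proof -
        have "cmod (z - s) \<le> 3*\<delta>/4" using that r by (simp add: dist_eq_cmod)
        then have zZ: "z \<in> Z" using inStrip that by (simp add: Z_def zero_set_def)
        then have ne: "Z \<noteq> {}" by blast
        have "infdist s Z \<le> cmod (z - s)" using infdist_le[OF zZ, of s] by (simp add: dist_eq_cmod)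
        then have "1 / cmod (z - s) \<le> 1 / infdist s Z" using ipos[OF ne] by (simp add: frac_le)
        then show ?thesis using ne by (simp add: K_def)
      qed
      have "cmod (deriv f s / f s) \<le> M'/\<mu> + r*M'/\<mu>*K"
      proof (rule local_bound[of "strip \<alpha> \<beta>" f r R s \<mu> M' K])
        show "open (strip \<alpha> \<beta>)" by (rule strip_open)
        show "f holomorphic_on strip \<alpha> \<beta>" by (rule hol)
        show "0 < r" "r < R" using rpos d0 by (auto simp: R_def)
        show "cball s R \<subseteq> strip \<alpha> \<beta>" by (rule cbR)
        show "finite {z \<in> cball s R. f z = 0}" using fin_all[OF compact_cball cbR] .
        show "f s \<noteq> 0" "0 < \<mu>" by (rule fs, rule mu)
        show "\<And>z. z \<in> sphere s r \<Longrightarrow> \<mu> \<le> cmod (f z)" by (rule r(3))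
        show "\<And>z. z \<in> sphere s r \<Longrightarrow> cmod (deriv f z) \<le> M'" by (rule dbound)
        show "0 \<le> K" by (rule K0)
        show "\<And>z. z \<in> ball s r \<Longrightarrow> f z = 0 \<Longrightarrow> 1 / cmod (z - s) \<le> K" by (rule Kb)
      qed
      also have "\<dots> \<le> A + B * K"
      proof -
        have "0 \<le> M'/\<mu>*K" using M0 d0 mu K0 by (simp add: M'_def)
        then have "r * (M'/\<mu>*K) \<le> \<delta>/2 * (M'/\<mu>*K)" using r(2) by (rule mult_right_mono[rotated])
        then show ?thesis by (simp add: A_def B_def mult_ac)
      qed
      finally have main: "cmod (deriv f s / f s) \<le> A + B * K" .
      show "cmod (deriv f s / f s) \<le> (if zero_set (strip \<alpha> \<beta>) f = {} then A
              else A + B / infdist s (zero_set (strip \<alpha> \<beta>) f))"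
      proof (cases "Z = {}")
        case True
        then show ?thesis using main by (simp add: K_def Z_def[symmetric])
      next
        case False
        then show ?thesis using main by (simp add: K_def Z_def[symmetric])
      qed
    qed
  qed
qed

end
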